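(* Let $\mathcal{F}$ be a flag of type $(ms_1,\dots,ms_r)$ on $\mathbb{F}_{q^n}$ with best friend $\mathbb{F}_{q^m}$, and let $\beta\in\mathbb{F}_{q^n}^\ast\setminus\mathbb{F}_{q^m}^\ast$. If $d_f(\mathrm{Orb}_\beta(\mathcal{F}))=2m$, then $\gcd(s_j,n/m)\neq 1$ for at least $r-1$ indices $j\in\{1,\dots,r\}$.
   Context: $q$ is a prime power and $\mathbb{F}_{q^n}$ is regarded as an $n$-dimensional $\mathbb{F}_q$-vector space; all subspaces are $\mathbb{F}_q$-subspaces. The subspace distance is $d_S(\mathcal{U},\mathcal{V})=\dim(\mathcal{U}+\mathcal{V})-\dim(\mathcal{U}\cap\mathcal{V})$. A flag $\mathcal{F}=(\mathcal{F}_1,\dots,\mathcal{F}_r)$ on $\mathbb{F}_{q^n}$ is a sequence of subspaces $\{0\}\subsetneq\mathcal{F}_1\subsetneq\cdots\subsetneq\mathcal{F}_r\subsetneq\mathbb{F}_{q^n}$; its type is $(\dim\mathcal{F}_1,\dots,\dim\mathcal{F}_r)$. The flag distance is $d_f(\mathcal{F},\mathcal{F}')=\sum_i d_S(\mathcal{F}_i,\mathcal{F}'_i)$; the minimum distance of a flag code is the minimum flag distance between distinct codewords ($0$ if the code has one element). For $\beta\in\mathbb{F}_{q^n}^\ast$, $\mathcal{F}\beta=(\mathcal{F}_1\beta,\dots,\mathcal{F}_r\beta)$ and $\mathrm{Orb}_\beta(\mathcal{F})=\{\mathcal{F}\beta^j: j\ge 0\}$. A subfield $\mathbb{F}_{q^m}$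 is a friend of a subspace $\mathcal{U}$ if $\mathcal{U}$ is an $\mathbb{F}_{q^m}$-vector space; the best friend is the largest friend. A friend of a flag is a common friend of all its subspaces; the best friend of a flag is its largest friend. *)

theory Defs
  imports "HOL-Algebra.Embedded_Algebras"
begin

text \<open>Ambient field R (playing the role of F_{q^n}), with a subfield K (playing F_q).
  All subspaces are K-subspaces of carrier R, i.e. subalgebras in the sense of
  HOL-Algebra; dimension is the library's ring.dim.\<close>

definition subspace_dist :: "('a, 'b) ring_scheme \<Rightarrow> 'a set \<Rightarrow> 'a set \<Rightarrow> 'a set \<Rightarrow> nat" where
  "subspace_dist R K U V =
     ring.dim R K (U <+>\<^bsub>R\<^esub> V) - ring.dim R K (U \<inter> V)"

text \<open>A flag (F_1,...,F_r) is represented by the list F with F!0 = F_1.\<close>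
definition is_flag :: "('a, 'b) ring_scheme \<Rightarrow> 'a set \<Rightarrow> 'a set list \<Rightarrow> bool" where
  "is_flag R K F \<longleftrightarrow> F \<noteq> [] \<and>
     (\<forall>i < length F. subalgebra K (F ! i) R) \<and>
     {\<zero>\<^bsub>R\<^esub>} \<subset> F ! 0 \<and>
     (\<forall>i. Suc i < length F \<longrightarrow> F ! i \<subset> F ! Suc i) \<and>
     last F \<subset> carrier R"

definition flag_dist :: "('a, 'b) ring_scheme \<Rightarrow> 'a set \<Rightarrow> 'a set list \<Rightarrow> 'a set list \<Rightarrow> nat" where
  "flag_dist R K F F' = (\<Sum>i < length F. subspace_dist R K (F ! i) (F' ! i))"

definition min_flag_dist :: "('a, 'b) ring_scheme \<Rightarrow> 'a set \<Rightarrow> 'a set list set \<Rightarrow> nat" where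
  "min_flag_dist R K C =
     (if card C \<le> 1 then 0
      else Min {flag_dist R K F F' | F F'. F \<in> C \<and> F' \<in> C \<and> F \<noteq> F'})"

definition flag_mult :: "('a, 'b) ring_scheme \<Rightarrow> 'a set list \<Rightarrow> 'a \<Rightarrow> 'a set list" where
  "flag_mult R F \<beta> = map (\<lambda>U. (\<lambda>x. x \<otimes>\<^bsub>R\<^esub> \<beta>) ` U) F"

definition flag_orbit :: "('a, 'b) ring_scheme \<Rightarrow> 'a set list \<Rightarrow> 'a \<Rightarrow> 'a set list set" where
  "flag_orbit R F \<beta> = {flag_mult R F (\<beta> [^]\<^bsub>R\<^esub> (j::nat)) | j. True}"

definition is_friend :: "('a, 'b) ring_scheme \<Rightarrow> 'a set \<Rightarrow> 'a set \<Rightarrow> 'a set \<Rightarrow> bool" where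
  "is_friend R K L U \<longleftrightarrow> subfield L R \<and> K \<subseteq> L \<and>
     (\<forall>l \<in> L. \<forall>u \<in> U. l \<otimes>\<^bsub>R\<^esub> u \<in> U)"

definition is_flag_friend :: "('a, 'b) ring_scheme \<Rightarrow> 'a set \<Rightarrow> 'a set \<Rightarrow> 'a set list \<Rightarrow> bool" where
  "is_flag_friend R K L F \<longleftrightarrow> subfield L R \<and> K \<subseteq> L \<and> (\<forall>U \<in> set F. is_friend R K L U)"

definition is_flag_best_friend :: "('a, 'b) ring_scheme \<Rightarrow> 'a set \<Rightarrow> 'a set \<Rightarrow> 'a set list \<Rightarrow> bool" where
  "is_flag_best_friend R K L F \<longleftrightarrow> is_flag_friend R K L F \<and>
     (\<forall>L'. is_flag_friend R K L' F \<longrightarrow> L' \<subseteq> L)"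

end

theory Submission
  imports Defs
begin


definition (in ring) lsp :: "'a set \<Rightarrow> 'a set \<Rightarrow> bool" where
  "lsp L W \<longleftrightarrow> subgroup W (add_monoid R) \<and> (\<forall>l\<in>L. \<forall>w\<in>W. l \<otimes> w \<in> W)"

lemma (in ring) lsp_subalgebra:
  assumes "lsp L W" "K \<subseteq> L" shows "subalgebra K W R"
  using assms unfolding lsp_def subalgebra_def subalgebra_axioms_def by blast

lemma (in ring) fd_carrier:
  assumes "subfield K R" "finite (carrier R)"
  shows "finite_dimension K (carrier R)"
proof -
  obtain Us where Us: "set Us = carrier R" using finite_list[OF assms(2)] by blast
  have "Span K Us \<subseteq> carrier R"
    using Span_in_carrier[of K Us] subfieldE(3)[OF assms(1)] Us by auto
  moreover have "set Us \<subseteq> Span K Us" using Span_base_incl[OF assms(1)] Us by auto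
  ultimately have "Span K Us = carrier R" using Us by auto
  thus ?thesis using Span_finite_dimension[OF assms(1)] Us by force
qed

lemma (in ring) fd_sub:
  assumes "subfield K R" "finite (carrier R)" "subalgebra K W R"
  shows "finite_dimension K W"
  using subalbegra_incl_imp_finite_dimension[OF assms(1) fd_carrier[OF assms(1,2)] assms(3)
      subalgebra_in_carrier[OF assms(3)]] .

lemma (in ring) subfield_lsp:
  assumes "subfield M R" shows "lsp M M"
  using subring.axioms(1)[OF subfieldE(1)[OF assms]] subringE(6)[OF subfieldE(1)[OF assms]]
  unfolding lsp_def by auto

lemma (in ring) dim_mult:
  assumes "subfield K R" "subfield M R" "K \<subseteq> M" "finite (carrier R)" "lsp M W"
  shows "dim K W = dim K M * dim M W"
proof -
  have "subalgebra K M R" using lsp_subalgebra[OF subfield_lsp[OF assms(2)] assms(3)] .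
  hence fK: "finite_dimension K M" using fd_sub assms by blast
  have "subalgebra M W R" using lsp_subalgebra[OF assms(5)] by auto
  hence fM: "finite_dimension M W" using fd_sub assms by blast
  show ?thesis using telescopic_base_dim(2)[OF assms(1,2) fK fM] unfolding over_def .
qed

lemma (in ring) dim_strict:
  assumes "subfield K R" "finite (carrier R)" "subalgebra K V R" "subalgebra K E R" "V \<subset> E"
  shows "dim K V < dim K E"
proof -
  have dV: "dimension (dim K V) K V" using finite_dimensionE[OF assms(1) fd_sub[OF assms(1,2,3)]]
    unfolding over_def .
  have dE: "dimension (dim K E) K E" using finite_dimensionE[OF assms(1) fd_sub[OF assms(1,2,4)]]
    unfolding over_def .
  obtain Us where Us: "set Us \<subseteq> carrier R" "independent K Us" "length Us = dim K V" "Span K Us = V"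
    using exists_base[OF assms(1) dV] by blast
  have sub: "set Us \<subseteq> E" using Span_base_incl[OF assms(1) Us(1)] Us(4) assms(5) by auto
  have le: "length Us \<le> dim K E" using independent_length_le_dimension[OF assms(1) dE Us(2) sub] .
  show ?thesis
  proof (rule ccontr)
    assume "\<not> ?thesis"
    hence "length Us = dim K E" using le Us(3) by auto
    hence "Span K Us = E" using independent_length_eq_dimension[OF assms(1) dE Us(2) sub] by simp
    thus False using Us(4) assms(5) by simp
  qed
qed

lemma (in ring) lsp_inter:
  assumes "lsp L U" "lsp L V" shows "lsp L (U \<inter> V)"
  using assms add.subgroups_Inter_pair unfolding lsp_def by auto

lemma (in ring) mem_set_add:
  "x \<in> U <+>\<^bsub>R\<^esub> V \<longleftrightarrow> (\<exists>u\<in>U. \<exists>v\<in>V. x = u \<oplus> v)"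
  by (auto simp: set_add_def' )

lemma (in ring) lsp_add:
  assumes "lsp L U" "lsp L V" "L \<subseteq> carrier R" shows "lsp L (U <+>\<^bsub>R\<^esub> V)"
proof -
  have "additive_subgroup (U <+>\<^bsub>R\<^esub> V) R"
    using add_additive_subgroups[of U V] assms unfolding lsp_def additive_subgroup_def by auto
  hence sg: "subgroup (U <+>\<^bsub>R\<^esub> V) (add_monoid R)" unfolding additive_subgroup_def .
  have "l \<otimes> x \<in> U <+>\<^bsub>R\<^esub> V" if lx: "l \<in> L" "x \<in> U <+>\<^bsub>R\<^esub> V" for l x
  proof -
    obtain u v where uv: "u \<in> U" "v \<in> V" "x = u \<oplus> v" using lx(2) mem_set_add by blast
    have c: "u \<in> carrier R" "v \<in> carrier R" "l \<in> carrier R"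
      using uv assms lx add.subgroupE(1) unfolding lsp_def by auto
    have "l \<otimes> x = l \<otimes> u \<oplus> l \<otimes> v" using c uv(3) r_distr by simp
    moreover have "l \<otimes> u \<in> U" "l \<otimes> v \<in> V" using assms uv lx unfolding lsp_def by auto
    ultimately show ?thesis using mem_set_add by blast
  qed
  thus ?thesis using sg unfolding lsp_def by auto
qed

lemma (in ring) lsp_sub_add1: "lsp L V \<Longrightarrow> U \<subseteq> carrier R \<Longrightarrow> U \<subseteq> U <+>\<^bsub>R\<^esub> V"
  unfolding lsp_def using mem_set_add add.subgroupE add.one_in_subset
  by (metis r_zero subsetI subset_iff)

lemma (in ring) lsp_sub_add2: "lsp L U \<Longrightarrow> V \<subseteq> carrier R \<Longrightarrow> V \<subseteq> U <+>\<^bsub>R\<^esub> V"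
  unfolding lsp_def using mem_set_add add.subgroupE add.one_in_subset
  by (metis l_zero subsetI subset_iff)


lemma (in ring) lsp_img:
  assumes "lsp L U" "L \<subseteq> carrier R" "c \<in> carrier R"
  shows "lsp L ((\<lambda>x. x \<otimes> c) ` U)"
proof -
  have sg: "subgroup U (add_monoid R)" and cl: "\<forall>l\<in>L. \<forall>w\<in>U. l \<otimes> w \<in> U"
    using assms(1) unfolding lsp_def by auto
  have Uc: "U \<subseteq> carrier R" using add.subgroupE(1)[OF sg] by simp
  have "subgroup ((\<lambda>x. x \<otimes> c) ` U) (add_monoid R)"
  proof (rule add.subgroupI)
    show "(\<lambda>x. x \<otimes> c) ` U \<subseteq> carrier R" using Uc assms(3) by auto
    show "(\<lambda>x. x \<otimes> c) ` U \<noteq> {}" using add.subgroupE(2)[OF sg] by auto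
  next
    fix a assume "a \<in> (\<lambda>x. x \<otimes> c) ` U"
    then obtain x where x: "x \<in> U" "a = x \<otimes> c" by auto
    have "\<ominus> a = (\<ominus> x) \<otimes> c" using x Uc assms(3) l_minus by auto
    moreover have "\<ominus> x \<in> U" using add.subgroupE(3)[OF sg x(1)] by (simp add: a_inv_def)
    ultimately show "\<ominus> a \<in> (\<lambda>x. x \<otimes> c) ` U" by simp
  next
    fix a b assume "a \<in> (\<lambda>x. x \<otimes> c) ` U" "b \<in> (\<lambda>x. x \<otimes> c) ` U"
    then obtain x y where xy: "x \<in> U" "a = x \<otimes> c" "y \<in> U" "b = y \<otimes> c" by auto
    have xc: "x \<in> carrier R" "y \<in> carrier R" using xy Uc by auto
    have "a \<oplus> b = (x \<oplus> y) \<otimes> c" using xy xc assms(3) l_distr[of x y c] by simp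
    moreover have "x \<oplus> y \<in> U" using add.subgroupE(4)[OF sg xy(1,3)] by simp
    ultimately show "a \<oplus> b \<in> (\<lambda>x. x \<otimes> c) ` U" by simp
  qed
  moreover have "l \<otimes> w \<in> (\<lambda>x. x \<otimes> c) ` U" if lw: "l \<in> L" "w \<in> (\<lambda>x. x \<otimes> c) ` U" for l w
  proof -
    obtain x where x: "x \<in> U" "w = x \<otimes> c" using lw by auto
    have xc: "x \<in> carrier R" "l \<in> carrier R" using x lw Uc assms(2) by auto
    have "l \<otimes> w = (l \<otimes> x) \<otimes> c" using x xc assms(3) m_assoc[of l x c] by simp
    thus ?thesis using cl x lw by auto
  qed
  ultimately show ?thesis unfolding lsp_def by auto
qed

lemma (in ring) lsp_dist:
  assumes "subfield K R" "subfield L R" "K \<subseteq> L" "finite (carrier R)"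
    and "lsp L U" "lsp L V" "card U = card V" "U \<noteq> V"
  shows "2 * dim K L \<le> dim K (U <+>\<^bsub>R\<^esub> V) - dim K (U \<inter> V)"
proof -
  have Uc: "U \<subseteq> carrier R" and Vc: "V \<subseteq> carrier R"
    using assms(5,6) add.subgroupE(1) unfolding lsp_def by auto
  have fU: "finite U" "finite V" using Uc Vc assms(4) finite_subset by auto
  have nUV: "\<not> U \<subseteq> V"
  proof
    assume "U \<subseteq> V" hence ps: "U \<subset> V" using assms(8) by auto
    show False using psubset_card_mono[OF fU(2) ps] assms(7) by simp
  qed
  have nVU: "\<not> V \<subseteq> U"
  proof
    assume "V \<subseteq> U" hence ps: "V \<subset> U" using assms(8) by auto
    show False using psubset_card_mono[OF fU(1) ps] assms(7) by simp
  qed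
  have Lc: "L \<subseteq> carrier R" using subfieldE(3)[OF assms(2)] .
  have l1: "lsp L (U \<inter> V)" using lsp_inter assms by auto
  have l2: "lsp L (U <+>\<^bsub>R\<^esub> V)" using lsp_add assms Lc by auto
  have s1: "U \<inter> V \<subset> U" using nUV by auto
  have s2: "U \<subset> U <+>\<^bsub>R\<^esub> V"
    using lsp_sub_add1[OF assms(6) Uc] lsp_sub_add2[OF assms(5) Vc] nVU by auto
  have d1: "dim K (U \<inter> V) < dim K U"
    using dim_strict[OF assms(1,4) lsp_subalgebra[OF l1 assms(3)] lsp_subalgebra[OF assms(5,3)] s1] .
  have d2: "dim K U < dim K (U <+>\<^bsub>R\<^esub> V)"
    using dim_strict[OF assms(1,4) lsp_subalgebra[OF assms(5,3)] lsp_subalgebra[OF l2 assms(3)] s2] .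
  have e1: "dim K (U \<inter> V) = dim K L * dim L (U \<inter> V)" using dim_mult[OF assms(1,2,3,4) l1] .
  have e2: "dim K U = dim K L * dim L U" using dim_mult[OF assms(1,2,3,4) assms(5)] .
  have e3: "dim K (U <+>\<^bsub>R\<^esub> V) = dim K L * dim L (U <+>\<^bsub>R\<^esub> V)"
    using dim_mult[OF assms(1,2,3,4) l2] .
  define a b c where "a = dim L (U \<inter> V)" "b = dim L U" "c = dim L (U <+>\<^bsub>R\<^esub> V)"
  have "a < b" "b < c" using d1 d2 e1 e2 e3 a_b_c_def by auto
  hence "a + 2 \<le> c" by auto
  hence "dim K L * a + 2 * dim K L \<le> dim K L * c"
    by (metis add_mult_distrib2 mult.commute mult_le_mono2)
  thus ?thesis using e1 e3 a_b_c_def by auto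
qed

lemma (in field) stab_subfield:
  assumes "finite (carrier R)" "subgroup U (add_monoid R)"
  shows "subfield {x \<in> carrier R. \<forall>u\<in>U. x \<otimes> u \<in> U} R" (is "subfield ?M R")
proof -
  have Uc: "U \<subseteq> carrier R" using add.subgroupE(1)[OF assms(2)] by simp
  have fU: "finite U" using Uc assms(1) finite_subset by auto
  have sr: "subring ?M R"
  proof (rule subringI)
    show "?M \<subseteq> carrier R" by auto
    show "\<one> \<in> ?M" using Uc by auto
  next
    fix h assume h: "h \<in> ?M"
    have "\<ominus> h \<otimes> u \<in> U" if "u \<in> U" for u
    proof -
      have "\<ominus> h \<otimes> u = \<ominus> (h \<otimes> u)" using h that Uc l_minus by auto
      moreover have "\<ominus> (h \<otimes> u) \<in> U" using add.subgroupE(3)[OF assms(2)] h that by (simp add: a_inv_def)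
      ultimately show ?thesis by simp
    qed
    thus "\<ominus> h \<in> ?M" using h by auto
  next
    fix h1 h2 assume h: "h1 \<in> ?M" "h2 \<in> ?M"
    have "h1 \<otimes> h2 \<otimes> u \<in> U" if "u \<in> U" for u
      using h that Uc m_assoc by (auto simp: subset_iff)
    thus "h1 \<otimes> h2 \<in> ?M" using h by auto
    have "(h1 \<oplus> h2) \<otimes> u \<in> U" if "u \<in> U" for u
    proof -
      have "(h1 \<oplus> h2) \<otimes> u = h1 \<otimes> u \<oplus> h2 \<otimes> u" using h that Uc l_distr by auto
      thus ?thesis using add.subgroupE(4)[OF assms(2)] h that by auto
    qed
    thus "h1 \<oplus> h2 \<in> ?M" using h by auto
  qed
  show ?thesis
  proof (rule subfieldI'[OF sr])
    fix k assume k: "k \<in> ?M - {\<zero>}"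
    have kc: "k \<in> carrier R" "k \<noteq> \<zero>" using k by auto
    have ik: "inv k \<in> carrier R" "inv k \<otimes> k = \<one>" using kc field_Units by auto
    have "(\<lambda>u. k \<otimes> u) ` U \<subseteq> U" using k by auto
    moreover have "inj_on (\<lambda>u. k \<otimes> u) U"
      using kc Uc m_lcancel by (auto simp: inj_on_def subset_iff)
    ultimately have eq: "(\<lambda>u. k \<otimes> u) ` U = U" using endo_inj_surj[OF fU] by auto
    have "inv k \<otimes> u \<in> U" if "u \<in> U" for u
    proof -
      have "u \<in> (\<lambda>u. k \<otimes> u) ` U" using eq that by simp
      then obtain w where w: "w \<in> U" "u = k \<otimes> w" by auto
      have wc: "w \<in> carrier R" using w Uc by auto
      have "inv k \<otimes> u = w" using w ik kc wc by (metis m_assoc l_one)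
      thus ?thesis using w by auto
    qed
    thus "inv k \<in> ?M" using ik by auto
  qed
qed

lemma (in field) shift:
  assumes "\<beta> \<in> carrier R" "\<beta> \<noteq> \<zero>" "p < q" "U \<subseteq> carrier R"
    and "(\<lambda>x. x \<otimes> \<beta> [^] p) ` U = (\<lambda>x. x \<otimes> \<beta> [^] (q::nat)) ` U" "u \<in> U"
  shows "\<beta> [^] (q - p) \<otimes> u \<in> U"
proof -
  have "u \<otimes> \<beta> [^] q \<in> (\<lambda>x. x \<otimes> \<beta> [^] p) ` U" using assms(5,6) by auto
  then obtain w where w: "w \<in> U" "u \<otimes> \<beta> [^] q = w \<otimes> \<beta> [^] p" by auto
  have bq: "\<beta> [^] q = \<beta> [^] (q - p) \<otimes> \<beta> [^] p" using assms(1,3) nat_pow_mult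
    by (metis le_add_diff_inverse2 less_imp_le_nat)
  have "\<beta> [^] p \<in> Units R" using field_Units assms(1,2) Units_pow_closed by auto
  hence bp: "\<beta> [^] p \<noteq> \<zero>" using field_Units by auto
  have uc: "u \<in> carrier R" "w \<in> carrier R" using assms w by auto
  have "(u \<otimes> \<beta> [^] (q - p)) \<otimes> \<beta> [^] p = w \<otimes> \<beta> [^] p"
    using w(2) bq uc assms(1) m_assoc by auto
  hence "u \<otimes> \<beta> [^] (q - p) = w" using m_rcancel[OF bp] uc assms(1) by auto
  thus ?thesis using w uc assms(1) m_comm by auto
qed


lemma (in field) gcd_part:
  assumes "finite (carrier R)" "subfield K R" "subfield L R" "K \<subseteq> L" "lsp L U"
    and "c \<in> carrier R" "c \<notin> L" "\<forall>u\<in>U. c \<otimes> u \<in> U"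
    and "dim K U = dim K L * s" "n = dim K (carrier R)"
  shows "gcd s (n div dim K L) \<noteq> 1"
proof -
  define M where "M = {x \<in> carrier R. \<forall>u\<in>U. x \<otimes> u \<in> U}"
  have sgU: "subgroup U (add_monoid R)" using assms(5) unfolding lsp_def by auto
  have Msf: "subfield M R" unfolding M_def using stab_subfield[OF assms(1) sgU] .
  have Lc: "L \<subseteq> carrier R" using subfieldE(3)[OF assms(3)] .
  have LM: "L \<subseteq> M" using assms(5) Lc unfolding lsp_def M_def by auto
  have cM: "c \<in> M" using assms(6,8) unfolding M_def by auto
  have LsM: "L \<subset> M" using LM cM assms(7) by auto
  have KM: "K \<subseteq> M" using assms(4) LM by auto
  have saL: "subalgebra K L R" using lsp_subalgebra[OF subfield_lsp[OF assms(3)] assms(4)] .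
  have saM: "subalgebra K M R" using lsp_subalgebra[OF subfield_lsp[OF Msf] KM] .
  have lt: "dim K L < dim K M" using dim_strict[OF assms(2,1) saL saM LsM] .
  have lspLM: "lsp L M"
    using subfield_lsp[OF Msf] LM subringE(6)[OF subfieldE(1)[OF Msf]] unfolding lsp_def by auto
  have e1: "dim K M = dim K L * dim L M" using dim_mult[OF assms(2,3,4,1) lspLM] .
  have lspMU: "lsp M U" using sgU unfolding lsp_def M_def by auto
  have e2: "dim K U = dim K M * dim M U" using dim_mult[OF assms(2) Msf KM assms(1) lspMU] .
  have lspMC: "lsp M (carrier R)"
    using subfield_lsp[OF carrier_is_subfield] subfieldE(3)[OF Msf] unfolding lsp_def by auto
  have e3: "n = dim K M * dim M (carrier R)" using dim_mult[OF assms(2) Msf KM assms(1) lspMC] assms(10) by simp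
  define m t u v where "m = dim K L" "t = dim L M" "u = dim M U" "v = dim M (carrier R)"
  have mpos: "m > 0" using lt e1 m_t_u_v_def by (cases "m = 0") auto
  have t1: "t > 1" using lt e1 m_t_u_v_def mpos by (metis less_one mult.right_neutral mult_le_mono2 not_le nat_neq_iff mult_0_right)
  have "m * s = m * t * u" using assms(9) e1 e2 m_t_u_v_def by metis
  hence su: "s = t * u" using mpos by (simp add: mult.assoc)
  have "n = m * (t * v)" using e3 e1 m_t_u_v_def by (simp add: mult.assoc)
  hence nv: "n div m = t * v" using mpos by simp
  have "gcd s (n div m) = t * gcd u v" using su nv gcd_mult_distrib_nat by simp
  thus ?thesis using t1 m_t_u_v_def by (simp add: nat_mult_eq_1_iff)
qed

lemma (in field) img_eq:
  assumes "c \<in> carrier R" "c \<noteq> \<zero>" "b \<in> carrier R" "U \<subseteq> carrier R"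
    and "\<forall>u\<in>U. c \<otimes> u \<in> U" "\<forall>u\<in>U. inv c \<otimes> u \<in> U"
  shows "(\<lambda>x. x \<otimes> b) ` U = (\<lambda>x. x \<otimes> (c \<otimes> b)) ` U"
proof -
  have ic: "inv c \<in> carrier R" "inv c \<otimes> c = \<one>" using assms(1,2) field_Units by auto
  show ?thesis
  proof
    show "(\<lambda>x. x \<otimes> b) ` U \<subseteq> (\<lambda>x. x \<otimes> (c \<otimes> b)) ` U"
    proof
      fix y assume "y \<in> (\<lambda>x. x \<otimes> b) ` U"
      then obtain x where x: "x \<in> U" "y = x \<otimes> b" by auto
      have xc: "x \<in> carrier R" using x assms(4) by auto
      have "y = (inv c \<otimes> x) \<otimes> (c \<otimes> b)" using x(2) xc ic assms(1,3)
        by (metis l_one m_assoc m_closed m_comm)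
      thus "y \<in> (\<lambda>x. x \<otimes> (c \<otimes> b)) ` U" using assms(6) x(1) by auto
    qed
    show "(\<lambda>x. x \<otimes> (c \<otimes> b)) ` U \<subseteq> (\<lambda>x. x \<otimes> b) ` U"
    proof
      fix y assume "y \<in> (\<lambda>x. x \<otimes> (c \<otimes> b)) ` U"
      then obtain x where x: "x \<in> U" "y = x \<otimes> (c \<otimes> b)" by auto
      have xc: "x \<in> carrier R" using x assms(4) by auto
      have "y = (c \<otimes> x) \<otimes> b" using x(2) xc assms(1,3) by (metis m_assoc m_comm)
      thus "y \<in> (\<lambda>x. x \<otimes> b) ` U" using assms(5) x(1) by auto
    qed
  qed
qed



lemma (in field) main_aux:
  fixes K L :: "'a set"
    and F :: "'a set list" and s :: "nat list" and n m :: nat and \<beta> :: 'a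
  assumes "True" and "finite (carrier R)" and "subfield K R"
    and "n = dim K (carrier R)"
    and "is_flag R K F"
    and "is_flag_best_friend R K L F"
    and "m = dim K L"
    and "length s = length F"
    and "\<forall>i < length F. dim K (F ! i) = m * s ! i"
    and "\<beta> \<in> carrier R - {\<zero>}" and "\<beta> \<notin> L"
    and "min_flag_dist R K (flag_orbit R F \<beta>) = 2 * m"
  shows "card {j \<in> {1..length F}. gcd (s ! (j - 1)) (n div m) \<noteq> 1} \<ge> length F - 1"
proof -
  define r where "r = length F"
  have Fsa: "\<And>i. i < r \<Longrightarrow> subalgebra K (F ! i) R" using assms(5) unfolding is_flag_def r_def by auto
  have Lsf: "subfield L R" and KL: "K \<subseteq> L" and cl: "\<forall>U\<in>set F. \<forall>l\<in>L. \<forall>u\<in>U. l \<otimes> u \<in> U"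
    using assms(6) unfolding is_flag_best_friend_def is_flag_friend_def is_friend_def by auto
  have Lc: "L \<subseteq> carrier R" using subfieldE(3)[OF Lsf] .
  have Fc: "\<And>i. i < r \<Longrightarrow> F ! i \<subseteq> carrier R" using Fsa subalgebra_in_carrier by blast
  have lspF: "\<And>i. i < r \<Longrightarrow> lsp L (F ! i)"
    using Fsa cl subalgebra.axioms(1) unfolding lsp_def r_def by (metis nth_mem)
  have bc: "\<beta> \<in> carrier R" "\<beta> \<noteq> \<zero>" using assms(10) by auto
  have bpow: "\<And>j::nat. \<beta> [^] j \<in> carrier R \<and> \<beta> [^] j \<noteq> \<zero>"
  proof -
    fix j :: nat
    have "\<beta> [^] j \<in> Units R" using field_Units bc Units_pow_closed by auto
    thus "\<beta> [^] j \<in> carrier R \<and> \<beta> [^] j \<noteq> \<zero>" using field_Units by auto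
  qed
  have mpos: "m > 0"
  proof (rule ccontr)
    assume "\<not> m > 0" hence m0: "m = 0" by simp
    have "subalgebra K L R" using lsp_subalgebra[OF subfield_lsp[OF Lsf] KL] .
    hence "dimension (dim K L) K L"
      using finite_dimensionE[OF assms(3) fd_sub[OF assms(3,2)]] unfolding over_def by blast
    hence "L = {\<zero>}" using dimension_zero[OF assms(3)] m0 assms(7) by simp
    moreover have "\<one> \<in> L" using subringE(3)[OF subfieldE(1)[OF Lsf]] .
    ultimately show False by simp
  qed
  define C where "C = flag_orbit R F \<beta>"
  have Csub: "C \<subseteq> {xs. set xs \<subseteq> Pow (carrier R) \<and> length xs = r}"
  proof
    fix X assume "X \<in> C"
    then obtain j :: nat where X: "X = flag_mult R F (\<beta> [^] j)" unfolding C_def flag_orbit_def by auto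
    have "set X \<subseteq> Pow (carrier R)"
    proof
      fix Y assume "Y \<in> set X"
      then obtain i where i: "i < r" "Y = (\<lambda>x. x \<otimes> \<beta> [^] j) ` (F ! i)"
        unfolding X flag_mult_def r_def by (auto simp: in_set_conv_nth)
      show "Y \<in> Pow (carrier R)" using i Fc bpow by auto
    qed
    thus "X \<in> {xs. set xs \<subseteq> Pow (carrier R) \<and> length xs = r}" unfolding X flag_mult_def r_def by simp
  qed
  have Cfin: "finite C" using finite_subset[OF Csub finite_lists_length_eq] assms(2) by blast
  define D where "D = {flag_dist R K X Y | X Y. X \<in> C \<and> Y \<in> C \<and> X \<noteq> Y}"
  have Dfin: "finite D"
  proof -
    have "D \<subseteq> (\<lambda>(X, Y). flag_dist R K X Y) ` (C \<times> C)" unfolding D_def by auto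
    thus ?thesis using Cfin finite_subset by blast
  qed
  have cardC: "\<not> card C \<le> 1" using assms(12) mpos unfolding min_flag_dist_def C_def by auto
  have "D \<noteq> {}"
  proof -
    obtain X Y where "X \<in> C" "Y \<in> C" "X \<noteq> Y" using cardC card_le_Suc0_iff_eq[OF Cfin] by auto
    thus ?thesis unfolding D_def by auto
  qed
  hence "Min D \<in> D" using Min_in Dfin by blast
  moreover have "Min D = 2 * m" using assms(12) cardC unfolding min_flag_dist_def C_def D_def by simp
  ultimately obtain X Y where XY: "X \<in> C" "Y \<in> C" "X \<noteq> Y" "flag_dist R K X Y = 2 * m"
    unfolding D_def by auto
  obtain a b :: nat where ab: "X = flag_mult R F (\<beta> [^] a)" "Y = flag_mult R F (\<beta> [^] b)"
    using XY(1,2) unfolding C_def flag_orbit_def by auto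
  have Xi: "\<And>i. i < r \<Longrightarrow> X ! i = (\<lambda>x. x \<otimes> \<beta> [^] a) ` (F ! i)"
    unfolding ab flag_mult_def r_def by simp
  have Yi: "\<And>i. i < r \<Longrightarrow> Y ! i = (\<lambda>x. x \<otimes> \<beta> [^] b) ` (F ! i)"
    unfolding ab flag_mult_def r_def by simp
  have lenX: "length X = r" "length Y = r" unfolding ab flag_mult_def r_def by auto
  have card_img: "\<And>i j. i < r \<Longrightarrow> card ((\<lambda>x. x \<otimes> \<beta> [^] (j::nat)) ` (F ! i)) = card (F ! i)"
  proof -
    fix i j assume i: "i < r"
    have "inj_on (\<lambda>x. x \<otimes> \<beta> [^] (j::nat)) (F ! i)"
      using Fc[OF i] bpow[of j] m_rcancel by (auto simp: inj_on_def subset_iff)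
    thus "card ((\<lambda>x. x \<otimes> \<beta> [^] (j::nat)) ` (F ! i)) = card (F ! i)" by (rule card_image)
  qed
  have trm: "\<And>i. i < r \<Longrightarrow> X ! i \<noteq> Y ! i \<Longrightarrow> 2 * m \<le> subspace_dist R K (X ! i) (Y ! i)"
  proof -
    fix i assume i: "i < r" and ne: "X ! i \<noteq> Y ! i"
    have "2 * dim K L \<le> dim K (X ! i <+>\<^bsub>R\<^esub> Y ! i) - dim K (X ! i \<inter> Y ! i)"
      apply (rule lsp_dist[OF assms(3) Lsf KL assms(2)])
      using lsp_img[OF lspF[OF i] Lc] bpow Xi Yi i card_img ne by auto
    thus "2 * m \<le> subspace_dist R K (X ! i) (Y ! i)" unfolding subspace_dist_def assms(7) .
  qed
  have claimB: "\<And>i k. i < r \<Longrightarrow> k < r \<Longrightarrow> X ! i \<noteq> Y ! i \<Longrightarrow> X ! k \<noteq> Y ! k \<Longrightarrow> i = k"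
  proof (rule ccontr)
    fix i k assume ik: "i < r" "k < r" "X ! i \<noteq> Y ! i" "X ! k \<noteq> Y ! k" "i \<noteq> k"
    let ?t = "\<lambda>i. subspace_dist R K (X ! i) (Y ! i)"
    have "sum ?t {i, k} \<le> sum ?t {..<r}" by (rule sum_mono2) (use ik in auto)
    moreover have "sum ?t {i, k} = ?t i + ?t k" using ik by simp
    moreover have "sum ?t {..<r} = 2 * m" using XY(4) lenX unfolding flag_dist_def by simp
    ultimately have "?t i + ?t k \<le> 2 * m" by simp
    thus False using trm[OF ik(1,3)] trm[OF ik(2,4)] mpos by simp
  qed
  have genA: "\<And>p q k. p < (q::nat) \<Longrightarrow> flag_mult R F (\<beta> [^] p) \<noteq> flag_mult R F (\<beta> [^] q) \<Longrightarrow> k < r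
     \<Longrightarrow> (\<lambda>x. x \<otimes> \<beta> [^] p) ` (F ! k) = (\<lambda>x. x \<otimes> \<beta> [^] q) ` (F ! k)
     \<Longrightarrow> gcd (s ! k) (n div m) \<noteq> 1"
  proof -
    fix p q k :: nat
    assume pq: "p < q" and fne: "flag_mult R F (\<beta> [^] p) \<noteq> flag_mult R F (\<beta> [^] q)" and k: "k < r"
      and eq: "(\<lambda>x. x \<otimes> \<beta> [^] p) ` (F ! k) = (\<lambda>x. x \<otimes> \<beta> [^] q) ` (F ! k)"
    define c where "c = \<beta> [^] (q - p)"
    have cc: "c \<in> carrier R" "c \<noteq> \<zero>" using bpow c_def by auto
    have bq: "\<beta> [^] q = c \<otimes> \<beta> [^] p" unfolding c_def using bc(1) pq nat_pow_mult
      by (metis le_add_diff_inverse2 less_imp_le_nat)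
    have cU: "\<forall>u\<in>F ! k. c \<otimes> u \<in> F ! k" using shift[OF bc pq Fc[OF k] eq] c_def by auto
    have cL: "c \<notin> L"
    proof
      assume cL: "c \<in> L"
      have icL: "inv c \<in> L" using subfield_m_inv(1)[OF Lsf] cL cc by auto
      have "flag_mult R F (\<beta> [^] p) = flag_mult R F (\<beta> [^] q)"
        unfolding flag_mult_def bq
      proof (rule map_cong[OF refl])
        fix U assume U: "U \<in> set F"
        then obtain i where i: "i < r" "U = F ! i" by (auto simp: in_set_conv_nth r_def)
        show "(\<lambda>x. x \<otimes> \<beta> [^] p) ` U = (\<lambda>x. x \<otimes> (c \<otimes> \<beta> [^] p)) ` U"
          apply (rule img_eq[OF cc])
          using bpow i Fc cl U cL icL by auto
      qed
      thus False using fne by simp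
    qed
    show "gcd (s ! k) (n div m) \<noteq> 1"
      using gcd_part[OF assms(2,3) Lsf KL lspF[OF k] cc(1) cL cU _ assms(4)]
        assms(9) k assms(7) r_def by auto
  qed
  have claimA: "\<And>k. k < r \<Longrightarrow> X ! k = Y ! k \<Longrightarrow> gcd (s ! k) (n div m) \<noteq> 1"
  proof -
    fix k assume k: "k < r" and e: "X ! k = Y ! k"
    have "a \<noteq> b" using XY(3) ab by auto
    show "gcd (s ! k) (n div m) \<noteq> 1"
    proof (cases "a < b")
      case True
      show ?thesis using genA[OF True _ k] XY(3) ab e Xi[OF k] Yi[OF k] by auto
    next
      case False
      hence "b < a" using \<open>a \<noteq> b\<close> by auto
      show ?thesis using genA[OF \<open>b < a\<close> _ k] XY(3) ab e Xi[OF k] Yi[OF k] by auto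
    qed
  qed
  obtain i where i: "\<And>k. k < r \<Longrightarrow> k \<noteq> i \<Longrightarrow> X ! k = Y ! k"
    using claimB by blast
  have "{1..r} - {Suc i} \<subseteq> {j \<in> {1..r}. gcd (s ! (j - 1)) (n div m) \<noteq> 1}"
  proof
    fix j assume j: "j \<in> {1..r} - {Suc i}"
    hence "j - 1 < r" "j - 1 \<noteq> i" by auto
    thus "j \<in> {j \<in> {1..r}. gcd (s ! (j - 1)) (n div m) \<noteq> 1}" using claimA i j by auto
  qed
  hence "card ({1..r} - {Suc i}) \<le> card {j \<in> {1..r}. gcd (s ! (j - 1)) (n div m) \<noteq> 1}"
    by (rule card_mono[rotated]) auto
  moreover have "card ({1..r} - {Suc i}) \<ge> r - 1" using card_Diff_singleton_if[of "{1..r}" "Suc i"]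
    by (cases "Suc i \<in> {1..r}") auto
  ultimately show ?thesis unfolding r_def by simp
qed

theorem mainTheorem2:
  fixes R :: "('a, 'b) ring_scheme" and K L :: "'a set"
    and F :: "'a set list" and s :: "nat list" and n m :: nat and \<beta> :: 'a
  assumes "field R" and "finite (carrier R)" and "subfield K R"
    and "n = ring.dim R K (carrier R)"
    and "is_flag R K F"
    and "is_flag_best_friend R K L F"
    and "m = ring.dim R K L"
    and "length s = length F"
    and "\<forall>i < length F. ring.dim R K (F ! i) = m * s ! i"
    and "\<beta> \<in> carrier R - {\<zero>\<^bsub>R\<^esub>}" and "\<beta> \<notin> L"
    and "min_flag_dist R K (flag_orbit R F \<beta>) = 2 * m"
  shows "card {j \<in> {1..length F}. gcd (s ! (j - 1)) (n div m) \<noteq> 1} \<ge> length F - 1"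
  using field.main_aux[OF assms(1) TrueI assms(2-12)] .

end
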